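(* Let $m$ be a positive integer and let $(a_k)_{k\in\mathbb{Z}}$ be complex numbers with $\sum_{k=-\infty}^{\infty}|k a_k|<\infty$. Define $g(z)=\sum_{k=-\infty}^{\infty}a_k\,\bar z^{k}z^{2m-k}$ for $z\ne0$ and $g(0)=0$. Suppose at least one of the following conditions holds (they are increasingly weaker): (i) there exists an integer $l\le m$ with $|a_l|>\sum_{n\ne l}|a_n|$; (ii) there exists an integer $l\le m$ with $a_l\neq0$ and $\sum_{n=1}^{\infty}\bigl|\frac{a_{l+n}}{a_l}+\frac{\overline{a_{l-n}}}{\overline{a_l}}\bigr|<1$; (iii) there exists an integer $l\le m$ with $a_l\ne0$ and $\operatorname{Re}\Bigl(1+\sum_{n=1}^{\infty}\bigl(\frac{a_{l+n}}{a_l}+\frac{\overline{a_{l-n}}}{\overline{a_l}}\bigr)w^n\Bigr)>0$ for all $|w|=1$. Then $g$ is an even, homogeneous (of degree $2m$) $C^1$ function that satisfies the polynomial condition.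
   Context: Homogeneous of degree $d$ means $g(tz)=t^dg(z)$ for all $t>0$. Polynomial condition: let $g$ be an even $C^1$ function defined near $0\in\mathbb{C}$ with $g(z)=o(z)$ as $z\to0$. We say $g$ satisfies the polynomial condition (with respect to a holomorphic polynomial $p(\zeta_1,\zeta_2)$) if for every $C^1$ function $R$ defined near $0$ with $R(z)=o(g(z))$ as $z\to0$, both $\operatorname{Im} p(z,\bar z+g(z)+R(z))>0$ and $\operatorname{Im} p(z,\bar z-g(z)+R(z))<0$ hold for all $z\neq0$ sufficiently close to $0$; "$g$ satisfies the polynomial condition" means this holds for some polynomial $p$. *)

theory Defs
  imports "HOL-Analysis.Analysis" "HOL-Library.Landau_Symbols"
begin

text \<open>Continuously (real-)differentiable on an open set S, viewing C as R^2:
  the Frechet derivative exists at each point of S and depends continuously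
  (in operator norm) on the point.\<close>
definition C1_on :: "complex set \<Rightarrow> (complex \<Rightarrow> complex) \<Rightarrow> bool" where
  "C1_on S f \<longleftrightarrow> (\<exists>f' :: complex \<Rightarrow> (complex \<Rightarrow>\<^sub>L complex).
      (\<forall>x\<in>S. (f has_derivative blinfun_apply (f' x)) (at x)) \<and> continuous_on S f')"

definition even_fun :: "(complex \<Rightarrow> complex) \<Rightarrow> bool" where
  "even_fun g \<longleftrightarrow> (\<forall>z. g (- z) = g z)"

definition homogeneous_of_degree :: "nat \<Rightarrow> (complex \<Rightarrow> complex) \<Rightarrow> bool" where
  "homogeneous_of_degree d g \<longleftrightarrow> (\<forall>t::real. t > 0 \<longrightarrow> (\<forall>z. g (of_real t * z) = of_real (t ^ d) * g z))"

definition holo_poly2 :: "(complex \<Rightarrow> complex \<Rightarrow> complex) \<Rightarrow> bool" where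
  "holo_poly2 p \<longleftrightarrow> (\<exists>(N::nat) (c::nat \<Rightarrow> nat \<Rightarrow> complex).
      \<forall>z w. p z w = (\<Sum>i\<le>N. \<Sum>j\<le>N. c i j * z ^ i * w ^ j))"

text \<open>Polynomial condition with respect to p (R defined near 0 = C^1 on some ball
  around 0; values elsewhere irrelevant).\<close>
definition polynomial_condition_wrt ::
  "(complex \<Rightarrow> complex) \<Rightarrow> (complex \<Rightarrow> complex \<Rightarrow> complex) \<Rightarrow> bool" where
  "polynomial_condition_wrt g p \<longleftrightarrow>
     (\<forall>R. (\<exists>e>0. C1_on (ball 0 e) R) \<and> R \<in> o[at 0](g) \<longrightarrow>
        (\<forall>\<^sub>F z in at 0. Im (p z (cnj z + g z + R z)) > 0 \<and> Im (p z (cnj z - g z + R z)) < 0))"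

definition satisfies_polynomial_condition :: "(complex \<Rightarrow> complex) \<Rightarrow> bool" where
  "satisfies_polynomial_condition g \<longleftrightarrow>
     even_fun g \<and> (\<exists>e>0. C1_on (ball 0 e) g) \<and> g \<in> o[at 0](\<lambda>z. z) \<and>
     (\<exists>p. holo_poly2 p \<and> polynomial_condition_wrt g p)"

definition gser :: "(int \<Rightarrow> complex) \<Rightarrow> nat \<Rightarrow> complex \<Rightarrow> complex" where
  "gser a m z = (if z = 0 then 0
      else (\<Sum>\<^sub>\<infinity>k\<in>(UNIV::int set). a k * (cnj z) powi k * z powi (int (2 * m) - k)))"

end

theory Submission
  imports Defs "HOL-Library.Nat_Bijection"
begin



lemma norm_cnj_powi_mult:
  fixes z :: complex
  assumes "p + q = int n" "n > 0"
  shows "norm (cnj z powi p * z powi q) = norm z ^ n"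
proof (cases "z = 0")
  case True
  then show ?thesis using assms by (auto simp: power_int_0_left_if)
next
  case False
  have "norm (cnj z powi p * z powi q) = norm z powi p * norm z powi q"
    by (simp add: norm_mult norm_power_int)
  also have "\<dots> = norm z powi (p + q)" using False by (simp add: power_int_add)
  also have "\<dots> = norm z ^ n" using assms by simp
  finally show ?thesis .
qed

lemma summable_norm_a:
  fixes a :: "int \<Rightarrow> complex"
  assumes "(\<lambda>k. norm (of_int k * a k)) summable_on UNIV"
  shows "(\<lambda>k. norm (a k)) summable_on UNIV"
proof -
  have "(\<lambda>k. norm (a k)) summable_on (UNIV - {0})"
  proof (rule summable_on_comparison_test[OF summable_on_subset[OF assms]])
    fix k :: int assume "k \<in> UNIV - {0}"
    then have "1 \<le> \<bar>k\<bar>" by auto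
    then have "1 \<le> \<bar>real_of_int k\<bar>" by (metis of_int_1_le_iff of_int_abs)
    then show "norm (a k) \<le> norm (of_int k * a k)"
      using mult_right_mono[of 1 "\<bar>real_of_int k\<bar>" "norm (a k)"] by (simp add: norm_mult)
  qed auto
  then show ?thesis
    using summable_on_insert_iff[of "\<lambda>k. norm (a k)" 0 "UNIV - {0}"] by (simp add: insert_absorb)
qed

lemma summable_norm_weighted:
  fixes a :: "int \<Rightarrow> complex" and c :: "int \<Rightarrow> complex"
  assumes "(\<lambda>k. norm (a k)) summable_on UNIV"
    "(\<lambda>k. norm (of_int k * a k)) summable_on UNIV"
    "\<And>k. norm (c k) \<le> C + norm (of_int k :: complex)"
  shows "(\<lambda>k. norm (c k * a k)) summable_on UNIV"
proof -
  have "(\<lambda>k. C * norm (a k) + norm (of_int k * a k)) summable_on UNIV"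
    using assms by (intro summable_on_add summable_on_cmult_right)
  then show ?thesis
  proof (rule summable_on_comparison_test)
    fix k :: int
    have "norm (c k * a k) = norm (c k) * norm (a k)" by (simp add: norm_mult)
    also have "\<dots> \<le> (C + norm (of_int k :: complex)) * norm (a k)"
      by (intro mult_right_mono assms) auto
    finally show "norm (c k * a k) \<le> C * norm (a k) + norm (of_int k * a k)"
      by (simp add: algebra_simps norm_mult)
  qed auto
qed

lemma infsum_nat_suminf:
  fixes f :: "nat \<Rightarrow> 'a::{banach}"
  assumes "f summable_on UNIV"
  shows "f sums infsum f UNIV"
  using has_sum_imp_sums[OF has_sum_infsum[OF assms]] .

lemma int_decode_reindex:
  fixes f :: "int \<Rightarrow> 'a::{banach}"
  assumes "f summable_on UNIV"
  shows "(\<lambda>n. f (int_decode n)) sums infsum f UNIV"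
    and "(\<lambda>n. f (int_decode n)) summable_on UNIV"
proof -
  have img: "int_decode ` UNIV = UNIV" using surj_int_decode by simp
  show s: "(\<lambda>n. f (int_decode n)) summable_on UNIV"
    using summable_on_reindex[OF inj_int_decode, of f UNIV] assms img by (simp add: o_def)
  have "infsum f UNIV = infsum (\<lambda>n. f (int_decode n)) UNIV"
    using infsum_reindex[OF inj_int_decode, of f UNIV] img by (simp add: o_def)
  then show "(\<lambda>n. f (int_decode n)) sums infsum f UNIV"
    using infsum_nat_suminf[OF s] by simp
qed

lemma int_split:
  fixes f :: "int \<Rightarrow> 'a::{banach}"
  assumes "f summable_on UNIV"
  shows "(\<lambda>n. f (l + int (Suc n)) + f (l - int (Suc n))) sums (infsum f UNIV - f l)"
proof -
  define P where "P = (\<lambda>n::nat. l + int (Suc n)) ` UNIV"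
  define M where "M = (\<lambda>n::nat. l - int (Suc n)) ` UNIV"
  have injP: "inj (\<lambda>n::nat. l + int (Suc n))" by (auto simp: inj_def)
  have injM: "inj (\<lambda>n::nat. l - int (Suc n))" by (auto simp: inj_def)
  have U: "UNIV = insert l (P \<union> M)"
  proof -
    have "k \<in> insert l (P \<union> M)" for k
    proof (cases "k > l")
      case True
      then have "k = l + int (Suc (nat (k - l - 1)))" by simp
      then show ?thesis unfolding P_def by blast
    next
      case False
      show ?thesis
      proof (cases "k = l")
        case False
        with \<open>\<not> k > l\<close> have "k = l - int (Suc (nat (l - k - 1)))" by simp
        then show ?thesis unfolding M_def by blast
      qed simp
    qed
    then show ?thesis by blast
  qed
  have disj: "P \<inter> M = {}" "l \<notin> P \<union> M" unfolding P_def M_def by auto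
  have sP: "f summable_on P" "f summable_on M"
    by (rule summable_on_subset_banach[OF assms], simp)+
  have sP': "(\<lambda>n. f (l + int (Suc n))) summable_on UNIV"
    using sP(1) summable_on_reindex[OF injP, of f] unfolding P_def by (simp add: o_def)
  have sM': "(\<lambda>n. f (l - int (Suc n))) summable_on UNIV"
    using sP(2) summable_on_reindex[OF injM, of f] unfolding M_def by (simp add: o_def)
  have eP: "infsum f P = infsum (\<lambda>n. f (l + int (Suc n))) UNIV"
    using infsum_reindex[OF injP, of f] unfolding P_def by (simp add: o_def)
  have eM: "infsum f M = infsum (\<lambda>n. f (l - int (Suc n))) UNIV"
    using infsum_reindex[OF injM, of f] unfolding M_def by (simp add: o_def)
  have "infsum f UNIV = f l + (infsum f P + infsum f M)"
    apply (subst U)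
    apply (subst infsum_insert)
    using sP disj by (auto intro: summable_on_Un_disjoint simp: infsum_Un_disjoint)
  moreover have "(\<lambda>n. f (l + int (Suc n)) + f (l - int (Suc n))) sums (infsum f P + infsum f M)"
    unfolding eP eM by (intro sums_add infsum_nat_suminf sP' sM')
  ultimately show ?thesis by (simp add: algebra_simps)
qed




lemma series_basic:
  fixes w :: "int \<Rightarrow> complex" and p q :: "int \<Rightarrow> int"
  assumes n: "n > 0" and pq: "\<And>k. p k + q k = int n"
    and sw: "(\<lambda>k. norm (w k)) summable_on UNIV"
  shows "(\<lambda>k. w k * (cnj z powi p k * z powi q k)) summable_on UNIV"
    and "norm (\<Sum>\<^sub>\<infinity>k. w k * (cnj z powi p k * z powi q k)) \<le> (\<Sum>\<^sub>\<infinity>k. norm (w k)) * norm z ^ n"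
proof -
  have eq: "norm (w k * (cnj z powi p k * z powi q k)) = norm (w k) * norm z ^ n" for k
    using norm_cnj_powi_mult[OF pq n] by (simp add: norm_mult)
  have as: "(\<lambda>k. norm (w k * (cnj z powi p k * z powi q k))) summable_on UNIV"
    unfolding eq by (intro summable_on_cmult_left sw)
  then show "(\<lambda>k. w k * (cnj z powi p k * z powi q k)) summable_on UNIV"
    by (rule abs_summable_summable)
  have "norm (\<Sum>\<^sub>\<infinity>k. w k * (cnj z powi p k * z powi q k)) \<le> (\<Sum>\<^sub>\<infinity>k. norm (w k * (cnj z powi p k * z powi q k)))"
    by (rule norm_infsum_bound[OF as])
  also have "\<dots> = (\<Sum>\<^sub>\<infinity>k. norm (w k)) * norm z ^ n"
    unfolding eq by (rule infsum_cmult_left) (use sw in auto)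
  finally show "norm (\<Sum>\<^sub>\<infinity>k. w k * (cnj z powi p k * z powi q k)) \<le> (\<Sum>\<^sub>\<infinity>k. norm (w k)) * norm z ^ n" .
qed

lemma series_uniform:
  fixes w :: "int \<Rightarrow> complex" and p q :: "int \<Rightarrow> int"
  assumes n: "n > 0" and pq: "\<And>k. p k + q k = int n"
    and sw: "(\<lambda>k. norm (w k)) summable_on UNIV"
  shows "uniform_limit (ball z0 r)
           (\<lambda>N x. \<Sum>i<N. w (int_decode i) * (cnj x powi p (int_decode i) * x powi q (int_decode i)))
           (\<lambda>x. \<Sum>\<^sub>\<infinity>k. w k * (cnj x powi p k * x powi q k)) sequentially"
proof -
  define t where "t = (\<lambda>k x. w k * (cnj x powi p k * x powi q k))"
  have eq: "norm (t k x) = norm (w k) * norm x ^ n" for k x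
    using norm_cnj_powi_mult[OF pq n] by (simp add: norm_mult t_def)
  have "uniform_limit (ball z0 r) (\<lambda>N x. \<Sum>i<N. t (int_decode i) x)
        (\<lambda>x. suminf (\<lambda>i. t (int_decode i) x)) sequentially"
  proof (rule Weierstrass_m_test)
    fix i x assume "x \<in> ball z0 r"
    then have "norm x \<le> norm z0 + r"
      using norm_triangle_ineq2[of x z0] by (simp add: dist_norm norm_minus_commute)
    then show "norm (t (int_decode i) x) \<le> norm (w (int_decode i)) * (norm z0 + r) ^ n"
      unfolding eq by (intro mult_left_mono power_mono) auto
  next
    show "summable (\<lambda>i. norm (w (int_decode i)) * (norm z0 + r) ^ n)"
      using int_decode_reindex(1)[OF sw] by (intro summable_mult2) (auto simp: sums_iff)
  qed
  moreover have "suminf (\<lambda>i. t (int_decode i) x) = (\<Sum>\<^sub>\<infinity>k. t k x)" for x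
  proof -
    have "(\<lambda>k. t k x) summable_on UNIV"
      unfolding t_def by (rule series_basic(1)[OF n pq sw])
    then show ?thesis using int_decode_reindex(1)[of "\<lambda>k. t k x"] by (simp add: sums_iff)
  qed
  ultimately show ?thesis unfolding t_def by simp
qed

lemma series_cont:
  fixes w :: "int \<Rightarrow> complex" and p q :: "int \<Rightarrow> int"
  assumes n: "n > 0" and pq: "\<And>k. p k + q k = int n"
    and sw: "(\<lambda>k. norm (w k)) summable_on UNIV"
  shows "continuous_on UNIV (\<lambda>x. \<Sum>\<^sub>\<infinity>k. w k * (cnj x powi p k * x powi q k))"
proof -
  define S where "S = (\<lambda>x. \<Sum>\<^sub>\<infinity>k. w k * (cnj x powi p k * x powi q k))"
  define C where "C = (\<Sum>\<^sub>\<infinity>k. norm (w k))"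
  have bnd: "norm (S z) \<le> C * norm z ^ n" for z
    unfolding S_def C_def by (rule series_basic(2)[OF n pq sw])
  have "isCont S z0" for z0
  proof (cases "z0 = 0")
    case True
    have S0: "S 0 = 0" using bnd[of 0] n by (simp add: power_0_left)
    have "(S \<longlongrightarrow> 0) (at 0)"
    proof (rule Lim_null_comparison)
      show "\<forall>\<^sub>F x in at 0. norm (S x) \<le> C * norm x ^ n" using bnd by simp
      have "((\<lambda>x::complex. C * norm x ^ n) \<longlongrightarrow> C * norm (0::complex) ^ n) (at 0)"
        by (intro tendsto_intros)
      then show "((\<lambda>x::complex. C * norm x ^ n) \<longlongrightarrow> 0) (at 0)" using n by (simp add: power_0_left)
    qed
    then show ?thesis using True S0 by (simp add: isCont_def)
  next
    case False
    define r where "r = norm z0 / 2"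
    have r: "r > 0" using False by (simp add: r_def)
    have nz: "x \<noteq> 0" if "x \<in> ball z0 r" for x
      using that by (auto simp: r_def dist_norm)
    have "continuous_on (ball z0 r) S"
    proof -
      have "continuous_on (ball z0 r) (\<lambda>x. \<Sum>\<^sub>\<infinity>k. w k * (cnj x powi p k * x powi q k))"
      proof (rule uniform_limit_theorem[OF _ series_uniform[OF n pq sw]])
        show "\<forall>\<^sub>F N in sequentially. continuous_on (ball z0 r)
          (\<lambda>x. \<Sum>i<N. w (int_decode i) * (cnj x powi p (int_decode i) * x powi q (int_decode i)))"
          using nz by (intro always_eventually allI continuous_intros) auto
      qed simp
      then show ?thesis unfolding S_def .
    qed
    then show ?thesis using r continuous_on_eq_continuous_at[of "ball z0 r" S] by auto
  qed
  then show ?thesis unfolding S_def[symmetric] by (simp add: continuous_on_eq_continuous_at)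
qed




lemma term_deriv:
  fixes z :: complex and k :: int and c :: complex
  assumes "z \<noteq> 0"
  shows "((\<lambda>z. c * (cnj z powi k * z powi (int (2*m) - k))) has_derivative
     (\<lambda>v. (c * of_int k) * (cnj z powi (k - 1) * z powi (int (2*m) - k)) * cnj v
        + (c * of_int (int (2*m) - k)) * (cnj z powi k * z powi (int (2*m) - k - 1)) * v)) (at z within S)"
proof -
  have "((\<lambda>z. c * (cnj z powi k * z powi (int (2*m) - k))) has_derivative
     (\<lambda>v. c * (cnj z powi k * (v * (of_int (int (2*m) - k) * z powi (int (2*m) - k - 1)))
         + cnj v * (of_int k * cnj z powi (k - 1)) * z powi (int (2*m) - k)))) (at z within S)"
    using assms by (intro has_derivative_mult_right has_derivative_mult has_derivative_power_int
        has_derivative_cnj has_derivative_ident) auto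
  then show ?thesis
    by (rule has_derivative_eq_rhs) (simp add: fun_eq_iff algebra_simps)
qed




definition Gs :: "nat \<Rightarrow> (int \<Rightarrow> complex) \<Rightarrow> complex \<Rightarrow> complex" where
  "Gs m a z = (\<Sum>\<^sub>\<infinity>k. a k * (cnj z powi k * z powi (int (2*m) - k)))"
definition As :: "nat \<Rightarrow> (int \<Rightarrow> complex) \<Rightarrow> complex \<Rightarrow> complex" where
  "As m a z = (\<Sum>\<^sub>\<infinity>k. (a k * of_int k) * (cnj z powi (k - 1) * z powi (int (2*m) - k)))"
definition Bs :: "nat \<Rightarrow> (int \<Rightarrow> complex) \<Rightarrow> complex \<Rightarrow> complex" where
  "Bs m a z = (\<Sum>\<^sub>\<infinity>k. (a k * of_int (int (2*m) - k)) * (cnj z powi k * z powi (int (2*m) - k - 1)))"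

locale setting =
  fixes m :: nat and a :: "int \<Rightarrow> complex"
  assumes m_pos: "m > 0"
    and summ: "(\<lambda>k. norm (of_int k * a k)) summable_on (UNIV :: int set)"
begin

lemma sa: "(\<lambda>k. norm (a k)) summable_on UNIV"
  by (rule summable_norm_a[OF summ])

lemma sA: "(\<lambda>k. norm (a k * of_int k)) summable_on UNIV"
  using summ by (simp add: mult.commute)

lemma sB: "(\<lambda>k. norm (a k * of_int (int (2*m) - k))) summable_on UNIV"
proof -
  have "(\<lambda>k. norm (of_int (int (2*m) - k) * a k)) summable_on UNIV"
  proof (rule summable_norm_weighted[OF sa summ])
    fix k :: int
    have "norm (of_int (int (2*m) - k) :: complex) = \<bar>real_of_int (int (2*m) - k)\<bar>"
      by (metis norm_of_int)
    also have "\<dots> \<le> real (2*m) + \<bar>real_of_int k\<bar>" by linarith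
    finally show "norm (of_int (int (2*m) - k) :: complex) \<le> real (2*m) + norm (of_int k :: complex)"
      by (metis norm_of_int)
  qed
  then show ?thesis by (simp add: mult.commute)
qed

lemma n1: "2*m - 1 > 0" using m_pos by simp
lemma n2: "2*m > 0" using m_pos by simp
lemma pqA: "(k - 1) + (int (2*m) - k) = int (2*m - 1)" using m_pos by simp
lemma pqB: "k + (int (2*m) - k - 1) = int (2*m - 1)" using m_pos by simp
lemma pqG: "k + (int (2*m) - k) = int (2*m)" by simp

lemmas A_basic = series_basic[OF n1 pqA sA]
lemmas B_basic = series_basic[OF n1 pqB sB]
lemmas G_basic = series_basic[OF n2 pqG sa]

lemma A_bound: "norm (As m a z) \<le> (\<Sum>\<^sub>\<infinity>k. norm (a k * of_int k)) * norm z ^ (2*m-1)"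
  unfolding As_def by (rule A_basic(2))
lemma B_bound: "norm (Bs m a z) \<le> (\<Sum>\<^sub>\<infinity>k. norm (a k * of_int (int (2*m) - k))) * norm z ^ (2*m-1)"
  unfolding Bs_def by (rule B_basic(2))
lemma G_bound: "norm (Gs m a z) \<le> (\<Sum>\<^sub>\<infinity>k. norm (a k)) * norm z ^ (2*m)"
  unfolding Gs_def by (rule G_basic(2))

lemma A_cont: "continuous_on UNIV (As m a)"
  unfolding As_def[abs_def] by (rule series_cont[OF n1 pqA sA])
lemma B_cont: "continuous_on UNIV (Bs m a)"
  unfolding Bs_def[abs_def] by (rule series_cont[OF n1 pqB sB])
lemma G_cont: "continuous_on UNIV (Gs m a)"
  unfolding Gs_def[abs_def] by (rule series_cont[OF n2 pqG sa])

lemma A0: "As m a 0 = 0" using A_bound[of 0] n1 by (simp add: power_0_left)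
lemma B0: "Bs m a 0 = 0" using B_bound[of 0] n1 by (simp add: power_0_left)
lemma G0: "Gs m a 0 = 0" using G_bound[of 0] n2 by (simp add: power_0_left)

lemma G_deriv_nz:
  assumes z0: "z0 \<noteq> 0"
  shows "(Gs m a has_derivative (\<lambda>v. As m a z0 * cnj v + Bs m a z0 * v)) (at z0)"
proof -
  define r where "r = norm z0 / 2"
  have r: "r > 0" using z0 by (simp add: r_def)
  have nz: "x \<noteq> 0" if "x \<in> ball z0 r" for x
    using that by (auto simp: r_def dist_norm)
  define e where "e = int_decode"
  define f where "f = (\<lambda>n z. a (e n) * (cnj z powi (e n) * z powi (int (2*m) - e n)))"
  define f' where "f' = (\<lambda>n x v. (a (e n) * of_int (e n)) * (cnj x powi (e n - 1) * x powi (int (2*m) - e n)) * cnj v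
        + (a (e n) * of_int (int (2*m) - e n)) * (cnj x powi (e n) * x powi (int (2*m) - e n - 1)) * v)"
  have uA: "uniform_limit (ball z0 r) (\<lambda>N x. \<Sum>i<N. (a (e i) * of_int (e i)) * (cnj x powi (e i - 1) * x powi (int (2*m) - e i)))
        (As m a) sequentially"
    unfolding e_def As_def[abs_def] by (rule series_uniform[OF n1 pqA sA])
  have uB: "uniform_limit (ball z0 r) (\<lambda>N x. \<Sum>i<N. (a (e i) * of_int (int (2*m) - e i)) * (cnj x powi (e i) * x powi (int (2*m) - e i - 1)))
        (Bs m a) sequentially"
    unfolding e_def Bs_def[abs_def] by (rule series_uniform[OF n1 pqB sB])
  have "\<exists>g. \<forall>x\<in>ball z0 r. (\<lambda>n. f n x) sums g x \<and>
          (g has_derivative (\<lambda>v. As m a x * cnj v + Bs m a x * v)) (at x within ball z0 r)"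
  proof (rule has_derivative_series[where f' = f'])
    show "convex (ball z0 r)" by simp
    show "z0 \<in> ball z0 r" using r by simp
    show "(\<lambda>n. f n z0) sums Gs m a z0"
      unfolding f_def e_def Gs_def by (rule int_decode_reindex(1)[OF G_basic(1)])
    fix n x assume "x \<in> ball z0 r"
    then show "(f n has_derivative f' n x) (at x within ball z0 r)"
      unfolding f_def f'_def using nz by (intro term_deriv) auto
  next
    fix \<epsilon> :: real assume "\<epsilon> > 0"
    then have h2: "\<epsilon>/2 > 0" by simp
    show "\<forall>\<^sub>F n in sequentially. \<forall>x\<in>ball z0 r. \<forall>h. norm (sum (\<lambda>i. f' i x h) {..<n} - (As m a x * cnj h + Bs m a x * h)) \<le> \<epsilon> * norm h"
      using uniform_limitD[OF uA h2] uniform_limitD[OF uB h2]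
    proof eventually_elim
      case (elim n)
      show ?case
      proof (intro ballI allI)
        fix x h assume x: "x \<in> ball z0 r"
        define SA where "SA = (\<Sum>i<n. (a (e i) * of_int (e i)) * (cnj x powi (e i - 1) * x powi (int (2*m) - e i)))"
        define SB where "SB = (\<Sum>i<n. (a (e i) * of_int (int (2*m) - e i)) * (cnj x powi (e i) * x powi (int (2*m) - e i - 1)))"
        have "sum (\<lambda>i. f' i x h) {..<n} = SA * cnj h + SB * h"
          unfolding f'_def SA_def SB_def by (simp add: sum.distrib sum_distrib_right)
        then have "norm (sum (\<lambda>i. f' i x h) {..<n} - (As m a x * cnj h + Bs m a x * h))
             = norm ((SA - As m a x) * cnj h + (SB - Bs m a x) * h)"
          by (simp add: algebra_simps)
        also have "\<dots> \<le> norm (SA - As m a x) * norm h + norm (SB - Bs m a x) * norm h"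
          by (rule order.trans[OF norm_triangle_ineq]) (simp add: norm_mult)
        also have "\<dots> \<le> (\<epsilon>/2) * norm h + (\<epsilon>/2) * norm h"
        proof -
          have "dist SA (As m a x) < \<epsilon>/2" using elim(1) x unfolding SA_def by blast
          moreover have "dist SB (Bs m a x) < \<epsilon>/2" using elim(2) x unfolding SB_def by blast
          ultimately show ?thesis unfolding dist_norm
            by (intro add_mono mult_right_mono) auto
        qed
        finally show "norm (sum (\<lambda>i. f' i x h) {..<n} - (As m a x * cnj h + Bs m a x * h)) \<le> \<epsilon> * norm h"
          by simp
      qed
    qed
  qed
  then obtain g where g: "\<And>x. x \<in> ball z0 r \<Longrightarrow> (\<lambda>n. f n x) sums g x \<and>
          (g has_derivative (\<lambda>v. As m a x * cnj v + Bs m a x * v)) (at x within ball z0 r)"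
    by blast
  have gG: "g x = Gs m a x" if "x \<in> ball z0 r" for x
  proof -
    have "(\<lambda>n. f n x) sums Gs m a x"
      unfolding f_def e_def Gs_def by (rule int_decode_reindex(1)[OF G_basic(1)])
    then show ?thesis using g[OF that] sums_unique2 by blast
  qed
  have z0in: "z0 \<in> ball z0 r" using r by simp
  have "(Gs m a has_derivative (\<lambda>v. As m a z0 * cnj v + Bs m a z0 * v)) (at z0 within ball z0 r)"
    by (rule has_derivative_transform[OF z0in _ conjunct2[OF g[OF z0in]]]) (use gG in auto)
  then show ?thesis using at_within_open[OF z0in] by simp
qed

end




context setting
begin

definition "Dg z = (\<lambda>v. As m a z * cnj v + Bs m a z * v)"

lemma G_deriv0: "(Gs m a has_derivative Dg 0) (at 0)"
proof -
  define C where "C = (\<Sum>\<^sub>\<infinity>k. norm (a k))"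
  have D0: "Dg 0 = (\<lambda>v. 0)" by (simp add: Dg_def A0 B0 fun_eq_iff)
  have "((\<lambda>y. norm (Gs m a y - Gs m a 0 - Dg 0 (y - 0)) / norm (y - 0)) \<longlongrightarrow> 0) (at 0)"
  proof (rule Lim_null_comparison)
    show "\<forall>\<^sub>F y in at 0. norm (norm (Gs m a y - Gs m a 0 - Dg 0 (y - 0)) / norm (y - 0)) \<le> C * norm y ^ (2*m-1)"
    proof (rule eventually_at_filter[THEN iffD2, OF always_eventually], intro allI impI)
      fix y :: complex assume y: "y \<noteq> 0"
      have e: "norm y ^ (2*m) = norm y * norm y ^ (2*m-1)"
        using n2 by (metis Suc_diff_1 power_Suc)
      have "norm (Gs m a y) / norm y \<le> C * norm y ^ (2*m) / norm y"
        using G_bound[of y] y unfolding C_def by (intro divide_right_mono) auto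
      also have "\<dots> = C * norm y ^ (2*m-1)" using y unfolding e by simp
      finally show "norm (norm (Gs m a y - Gs m a 0 - Dg 0 (y - 0)) / norm (y - 0)) \<le> C * norm y ^ (2*m-1)"
        by (simp add: D0 G0)
    qed
    have "((\<lambda>y::complex. C * norm y ^ (2*m-1)) \<longlongrightarrow> C * norm (0::complex) ^ (2*m-1)) (at 0)"
      by (intro tendsto_intros)
    then show "((\<lambda>y::complex. C * norm y ^ (2*m-1)) \<longlongrightarrow> 0) (at 0)"
      using n1 by (simp add: power_0_left)
  qed
  moreover have "bounded_linear (Dg 0)" unfolding D0 by simp
  ultimately show ?thesis unfolding has_derivative_iff_norm by blast
qed

lemma G_deriv: "(Gs m a has_derivative Dg z) (at z)"
  using G_deriv0 G_deriv_nz[of z] unfolding Dg_def by (cases "z = 0") auto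

lemma Dg_bl: "bounded_linear (Dg z)"
  using G_deriv[of z] by (rule has_derivative_bounded_linear)

lemma G_C1: "C1_on UNIV (Gs m a)"
  unfolding C1_on_def
proof (intro exI[of _ "\<lambda>z. Blinfun (Dg z)"] conjI ballI)
  fix x :: complex
  show "(Gs m a has_derivative blinfun_apply (Blinfun (Dg x))) (at x)"
    using G_deriv[of x] by (simp add: bounded_linear_Blinfun_apply[OF Dg_bl])
next
  show "continuous_on UNIV (\<lambda>z. Blinfun (Dg z))"
    unfolding continuous_on_eq_continuous_at[OF open_UNIV]
  proof (intro ballI)
    fix z :: complex
    have tA: "(As m a \<longlongrightarrow> As m a z) (at z)" and tB: "(Bs m a \<longlongrightarrow> Bs m a z) (at z)"
      using A_cont B_cont by (auto simp: continuous_on_eq_continuous_at isCont_def)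
    have "((\<lambda>w. Blinfun (Dg w) - Blinfun (Dg z)) \<longlongrightarrow> 0) (at z)"
    proof (rule Lim_null_comparison)
      show "\<forall>\<^sub>F w in at z. norm (Blinfun (Dg w) - Blinfun (Dg z)) \<le> norm (As m a w - As m a z) + norm (Bs m a w - Bs m a z)"
      proof (intro always_eventually allI norm_blinfun_bound)
        fix w v :: complex
        have "norm (blinfun_apply (Blinfun (Dg w) - Blinfun (Dg z)) v) = norm ((As m a w - As m a z) * cnj v + (Bs m a w - Bs m a z) * v)"
          using bounded_linear_Blinfun_apply[OF Dg_bl[of w]] bounded_linear_Blinfun_apply[OF Dg_bl[of z]]
          by (simp only: blinfun.diff_left) (simp add: Dg_def algebra_simps)
        also have "\<dots> \<le> norm ((As m a w - As m a z) * cnj v) + norm ((Bs m a w - Bs m a z) * v)"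
          by (rule norm_triangle_ineq)
        also have "\<dots> = (norm (As m a w - As m a z) + norm (Bs m a w - Bs m a z)) * norm v"
          by (simp only: norm_mult complex_mod_cnj distrib_right)
        finally show "norm (blinfun_apply (Blinfun (Dg w) - Blinfun (Dg z)) v) \<le> (norm (As m a w - As m a z) + norm (Bs m a w - Bs m a z)) * norm v" .
      qed simp
      have "((\<lambda>w. norm (As m a w - As m a z) + norm (Bs m a w - Bs m a z)) \<longlongrightarrow> norm (As m a z - As m a z) + norm (Bs m a z - Bs m a z)) (at z)"
        by (intro tendsto_intros tA tB)
      then show "((\<lambda>w. norm (As m a w - As m a z) + norm (Bs m a w - Bs m a z)) \<longlongrightarrow> 0) (at z)" by simp
    qed
    then show "isCont (\<lambda>z. Blinfun (Dg z)) z"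
      unfolding isCont_def by (rule LIM_zero_cancel)
  qed
qed

lemma gser_Gs: "gser a m = Gs m a"
proof
  fix z
  show "gser a m z = Gs m a z"
    using G0 by (simp add: gser_def Gs_def mult.assoc)
qed

lemma G_even: "even_fun (Gs m a)"
  unfolding even_fun_def
proof
  fix z :: complex
  have "(-1 :: complex) powi k * (-1) powi (int (2*m) - k) = 1" for k
  proof -
    have "(-1 :: complex) powi (k + (int (2*m) - k)) = (-1) powi k * (-1) powi (int (2*m) - k)"
      by (rule power_int_add) simp
    then have "(-1 :: complex) powi k * (-1) powi (int (2*m) - k) = (-1) powi (k + (int (2*m) - k))"
      by simp
    also have "\<dots> = 1" by simp
    finally show ?thesis .
  qed
  then have eqk: "a k * (cnj (-z) powi k * (-z) powi (int (2*m) - k)) = a k * (cnj z powi k * z powi (int (2*m) - k))" for k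
    by (simp add: power_int_minus_left_distrib[where a = "cnj z"] power_int_minus_left_distrib[where a = z]
        algebra_simps)
  then show "Gs m a (- z) = Gs m a z" unfolding Gs_def by (rule infsum_cong)
qed

lemma G_homog: "homogeneous_of_degree (2*m) (Gs m a)"
  unfolding homogeneous_of_degree_def
proof (intro allI impI)
  fix t :: real and z :: complex assume t: "t > 0"
  have e: "a k * (cnj (of_real t * z) powi k * (of_real t * z) powi (int (2*m) - k))
      = of_real (t ^ (2*m)) * (a k * (cnj z powi k * z powi (int (2*m) - k)))" for k
  proof -
    have kk: "k + (int (2*m) - k) = int (2*m)" by simp
    have "(of_real t :: complex) powi (k + (int (2*m) - k)) = of_real t powi k * of_real t powi (int (2*m) - k)"
      by (rule power_int_add) (use t in simp)
    then have "(of_real t :: complex) powi k * of_real t powi (int (2*m) - k) = of_real t powi (int (2*m))"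
      by (simp only: kk)
    also have "\<dots> = of_real (t ^ (2*m))" by (simp only: power_int_of_nat of_real_power)
    finally have "(of_real t :: complex) powi k * of_real t powi (int (2*m) - k) = of_real (t ^ (2*m))" .
    then show ?thesis
      by (simp add: power_int_mult_distrib algebra_simps)
  qed
  show "Gs m a (of_real t * z) = of_real (t ^ (2*m)) * Gs m a z"
    unfolding Gs_def e by (rule infsum_cmult_right) (rule G_basic(1))
qed

end




lemma power_err:
  fixes N :: nat
  assumes N: "N > 0" and e: "\<epsilon> > 0"
  shows "\<exists>\<eta>>0. \<forall>x h :: complex. x \<noteq> 0 \<longrightarrow> norm h < \<eta> * norm x \<longrightarrow>
     norm ((x + h)^N - x^N - of_nat N * x^(N-1) * h) \<le> \<epsilon> * norm x ^ (N-1) * norm h"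
proof -
  have "((\<lambda>t::complex. (1 + t)^N) has_field_derivative of_nat N * (1 + 0)^(N-1)) (at 0)"
    by (auto intro!: derivative_eq_intros)
  then have "((\<lambda>y::complex. ((1 + y)^N - (1 + 0)^N) / (y - 0)) \<longlongrightarrow> of_nat N) (at 0)"
    unfolding has_field_derivative_iff by simp
  from LIM_D[OF this e] obtain \<eta> where \<eta>: "\<eta> > 0"
    and H: "\<And>y::complex. y \<noteq> 0 \<Longrightarrow> norm y < \<eta> \<Longrightarrow> norm (((1 + y)^N - 1) / y - of_nat N) < \<epsilon>"
    by auto
  show ?thesis
  proof (intro exI[of _ \<eta>] conjI allI impI \<eta>)
    fix x h :: complex assume x: "x \<noteq> 0" and h: "norm h < \<eta> * norm x"
    show "norm ((x + h)^N - x^N - of_nat N * x^(N-1) * h) \<le> \<epsilon> * norm x ^ (N-1) * norm h"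
    proof (cases "h = 0")
      case True then show ?thesis using N by simp
    next
      case False
      define y where "y = h / x"
      have y0: "y \<noteq> 0" using False x by (simp add: y_def)
      have ny: "norm y < \<eta>" using h x by (simp add: y_def norm_divide divide_less_eq mult.commute)
      have xN: "x^N = x * x^(N-1)" using N by (metis Suc_diff_1 power_Suc)
      have eq: "(x + h)^N - x^N - of_nat N * x^(N-1) * h = x^N * y * (((1 + y)^N - 1) / y - of_nat N)"
      proof -
        have "x + h = x * (1 + y)" using x by (simp add: y_def field_simps)
        then have A1: "(x + h)^N = x^N * (1 + y)^N" by (simp add: power_mult_distrib)
        have A2: "of_nat N * x^(N-1) * h = x^N * y * of_nat N"
          using x unfolding xN y_def by (simp add: field_simps)
        have yy: "y * (((1 + y)^N - 1) / y) = (1 + y)^N - 1" using y0 by simp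
        have "x^N * y * (((1 + y)^N - 1) / y - of_nat N) = x^N * (y * (((1 + y)^N - 1) / y)) - x^N * y * of_nat N"
          by (simp only: right_diff_distrib mult.assoc)
        then have A3: "x^N * y * (((1 + y)^N - 1) / y - of_nat N) = x^N * ((1 + y)^N - 1) - x^N * y * of_nat N"
          by (simp only: yy)
        show ?thesis unfolding A1 A2 A3 by (simp add: algebra_simps)
      qed
      have "norm ((x + h)^N - x^N - of_nat N * x^(N-1) * h) = norm x ^ N * norm y * norm (((1 + y)^N - 1) / y - of_nat N)"
        unfolding eq by (simp add: norm_mult norm_power)
      also have "\<dots> \<le> norm x ^ N * norm y * \<epsilon>"
        using H[OF y0 ny] by (intro mult_left_mono) auto
      also have "norm x ^ N * norm y = norm x ^ (N-1) * norm h"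
      proof -
        have nxN: "norm x ^ N = norm x * norm x ^ (N-1)" using N by (metis Suc_diff_1 power_Suc)
        show ?thesis using x unfolding y_def by (simp add: norm_mult norm_divide nxN)
      qed
      finally show ?thesis by (simp add: algebra_simps)
    qed
  qed
qed

lemma holo_poly2_simple:
  fixes c :: complex and N :: nat
  assumes "N > 0"
  shows "holo_poly2 (\<lambda>z w. c * w ^ N + cnj c * z ^ N)"
  unfolding holo_poly2_def
proof (intro exI allI)
  fix z w :: complex
  define cc where "cc = (\<lambda>i j. (if i = 0 \<and> j = N then c else 0) + (if i = N \<and> j = 0 then cnj c else 0))"
  have "(\<Sum>i\<le>N. \<Sum>j\<le>N. cc i j * z ^ i * w ^ j) =
        (\<Sum>i\<le>N. \<Sum>j\<le>N. (if i = 0 \<and> j = N then c * w ^ N else 0) + (if i = N \<and> j = 0 then cnj c * z ^ N else 0))"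
    unfolding cc_def by (intro sum.cong refl) auto
  also have "\<dots> = (\<Sum>i\<le>N. \<Sum>j\<le>N. (if i = 0 \<and> j = N then c * w ^ N else 0)) + (\<Sum>i\<le>N. \<Sum>j\<le>N. (if i = N \<and> j = 0 then cnj c * z ^ N else 0))"
    by (simp only: sum.distrib)
  also have "(\<Sum>i\<le>N. \<Sum>j\<le>N. (if i = 0 \<and> j = N then c * w ^ N else 0)) = c * w ^ N"
  proof -
    have "(\<Sum>j\<le>N. (if i = 0 \<and> j = N then c * w ^ N else 0)) = (if i = 0 then c * w ^ N else 0)" for i :: nat
      by (cases "i = 0") simp_all
    then have "(\<Sum>i\<le>N. \<Sum>j\<le>N. (if i = 0 \<and> j = N then c * w ^ N else 0)) = (\<Sum>i\<le>N. (if i = 0 then c * w ^ N else 0))"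
      by (intro sum.cong refl)
    then show ?thesis by simp
  qed
  also have "(\<Sum>i\<le>N. \<Sum>j\<le>N. (if i = N \<and> j = 0 then cnj c * z ^ N else 0)) = cnj c * z ^ N"
  proof -
    have "(\<Sum>j\<le>N. (if i = N \<and> j = 0 then cnj c * z ^ N else 0)) = (if i = N then cnj c * z ^ N else 0)" for i :: nat
      by (cases "i = N") simp_all
    then have "(\<Sum>i\<le>N. \<Sum>j\<le>N. (if i = N \<and> j = 0 then cnj c * z ^ N else 0)) = (\<Sum>i\<le>N. (if i = N then cnj c * z ^ N else 0))"
      by (intro sum.cong refl)
    then show ?thesis by simp
  qed
  finally show "c * w ^ N + cnj c * z ^ N = (\<Sum>i\<le>N. \<Sum>j\<le>N. cc i j * z ^ i * w ^ j)" by simp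
qed




context setting
begin

definition "bb l n = a (l + int (Suc n)) / a l + cnj (a (l - int (Suc n))) / cnj (a l)"

lemma split_norm: "summable (\<lambda>n. norm (a (l + int (Suc n))) + norm (a (l - int (Suc n))))"
  "(\<Sum>n. norm (a (l + int (Suc n))) + norm (a (l - int (Suc n)))) = (\<Sum>\<^sub>\<infinity>k. norm (a k)) - norm (a l)"
  using int_split[OF sa, of l] by (auto simp: sums_iff)

lemma bb_le: "norm (bb l n) \<le> (norm (a (l + int (Suc n))) + norm (a (l - int (Suc n)))) / norm (a l)"
proof -
  have "norm (bb l n) \<le> norm (a (l + int (Suc n)) / a l) + norm (cnj (a (l - int (Suc n))) / cnj (a l))"
    unfolding bb_def by (rule norm_triangle_ineq)
  also have "\<dots> = (norm (a (l + int (Suc n))) + norm (a (l - int (Suc n)))) / norm (a l)"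
    by (simp add: norm_divide add_divide_distrib)
  finally show ?thesis .
qed

lemma sum_bb: "summable (\<lambda>n. norm (bb l n))"
proof (rule summable_comparison_test'[where N = 0])
  show "summable (\<lambda>n. (norm (a (l + int (Suc n))) + norm (a (l - int (Suc n)))) / norm (a l))"
    by (intro summable_divide split_norm(1))
  show "norm (norm (bb l n)) \<le> (norm (a (l + int (Suc n))) + norm (a (l - int (Suc n)))) / norm (a l)" for n
    using bb_le by simp
qed

lemma sum_bbw: assumes "norm w = 1" shows "summable (\<lambda>n. bb l n * w ^ Suc n)"
  by (rule summable_norm_cancel) (use sum_bb assms in \<open>simp add: norm_mult norm_power\<close>)

lemma cond_ii_iii:
  assumes "(\<Sum>n. norm (bb l n)) < 1" "norm w = 1"
  shows "Re (1 + (\<Sum>n. bb l n * w ^ Suc n)) > 0"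
proof -
  have "norm (\<Sum>n. bb l n * w ^ Suc n) \<le> (\<Sum>n. norm (bb l n * w ^ Suc n))"
    by (rule summable_norm) (use sum_bb assms in \<open>simp add: norm_mult norm_power\<close>)
  also have "\<dots> = (\<Sum>n. norm (bb l n))" using assms by (simp add: norm_mult norm_power)
  finally have "norm (\<Sum>n. bb l n * w ^ Suc n) < 1" using assms by simp
  moreover have "- Re (\<Sum>n. bb l n * w ^ Suc n) \<le> norm (\<Sum>n. bb l n * w ^ Suc n)"
    using abs_Re_le_cmod[of "\<Sum>n. bb l n * w ^ Suc n"] by linarith
  ultimately show ?thesis by simp
qed

lemma cond_i_ii:
  assumes "norm (a l) > (\<Sum>\<^sub>\<infinity>n\<in>UNIV - {l}. norm (a n))"
  shows "a l \<noteq> 0" "(\<Sum>n. norm (bb l n)) < 1"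
proof -
  have s1: "(\<lambda>n. norm (a n)) summable_on (UNIV - {l})"
    by (rule summable_on_subset_banach[OF sa]) simp
  have nn: "(\<Sum>\<^sub>\<infinity>n\<in>UNIV - {l}. norm (a n)) \<ge> 0" by (rule infsum_nonneg) simp
  then show al: "a l \<noteq> 0" using assms by auto
  have U: "(\<Sum>\<^sub>\<infinity>k. norm (a k)) = norm (a l) + (\<Sum>\<^sub>\<infinity>n\<in>UNIV - {l}. norm (a n))"
    using infsum_insert[OF s1, of l] by (simp add: insert_absorb)
  have "(\<Sum>n. norm (bb l n)) \<le> (\<Sum>n. (norm (a (l + int (Suc n))) + norm (a (l - int (Suc n)))) / norm (a l))"
    by (intro suminf_le bb_le sum_bb summable_divide split_norm(1))
  also have "\<dots> = (\<Sum>n. norm (a (l + int (Suc n))) + norm (a (l - int (Suc n)))) / norm (a l)"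
    by (intro suminf_divide split_norm(1))
  also have "\<dots> = (\<Sum>\<^sub>\<infinity>n\<in>UNIV - {l}. norm (a n)) / norm (a l)"
    unfolding split_norm(2) U by simp
  also have "\<dots> < 1" using assms al by simp
  finally show "(\<Sum>n. norm (bb l n)) < 1" .
qed

end




context setting
begin

lemma unit_inv: fixes u :: complex assumes "norm u = 1" shows "cnj u = inverse u" "u \<noteq> 0"
proof -
  show "u \<noteq> 0" using assms by auto
  have "u * cnj u = 1" using assms complex_norm_square[of u] by simp
  then show "cnj u = inverse u" by (metis inverse_unique)
qed

lemma term_id:
  fixes u :: complex
  assumes u: "norm u = 1" and lm: "l \<le> int m"
  shows "cnj u ^ (2 * nat (int m - l)) / a l * (a k * (cnj u powi k * u powi (int (2*m) - k)))
         = (a k / a l) * (cnj u ^ 2) powi (k - l)"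
proof -
  have u0: "u \<noteq> 0" and ci: "cnj u = inverse u" using unit_inv[OF u] by auto
  have e1: "cnj u ^ (2 * nat (int m - l)) = u powi (- (2 * (int m - l)))"
  proof -
    have eqn: "int (2 * nat (int m - l)) = 2 * (int m - l)" using lm by simp
    have "cnj u ^ (2 * nat (int m - l)) = cnj u powi int (2 * nat (int m - l))" by (simp only: power_int_of_nat)
    also have "\<dots> = cnj u powi (2 * (int m - l))" by (simp only: eqn)
    also have "\<dots> = inverse (u powi (2 * (int m - l)))" by (simp only: ci power_int_inverse)
    also have "\<dots> = u powi (- (2 * (int m - l)))" by (rule power_int_minus[symmetric])
    finally show ?thesis .
  qed
  have e2: "cnj u powi k = u powi (-k)" by (simp only: ci power_int_inverse power_int_minus)
  have e3: "(cnj u ^ 2) powi (k - l) = u powi (-2 * (k - l))"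
  proof -
    have c1: "cnj u ^ 2 = inverse (u ^ 2)" by (simp add: ci power_inverse)
    have c2: "u powi (-2) = inverse (u ^ 2)" by (simp add: power_int_minus)
    have "(cnj u ^ 2) powi (k - l) = (u powi (-2)) powi (k - l)"
      by (simp only: c1 c2)
    also have "\<dots> = u powi (-2 * (k - l))" by (rule power_int_mult[symmetric])
    finally show ?thesis .
  qed
  have "u powi (- (2 * (int m - l))) * (u powi (-k) * u powi (int (2*m) - k))
      = u powi (- (2 * (int m - l)) + (-k + (int (2*m) - k)))"
  proof -
    have "u powi (-k) * u powi (int (2*m) - k) = u powi (-k + (int (2*m) - k))"
      by (rule power_int_add[symmetric]) (use u0 in simp)
    moreover have "u powi (- (2 * (int m - l))) * u powi (-k + (int (2*m) - k)) = u powi (- (2 * (int m - l)) + (-k + (int (2*m) - k)))"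
      by (rule power_int_add[symmetric]) (use u0 in simp)
    ultimately show ?thesis by simp
  qed
  also have "- (2 * (int m - l)) + (-k + (int (2*m) - k)) = -2 * (k - l)" by simp
  finally have "u powi (- (2 * (int m - l))) * (u powi (-k) * u powi (int (2*m) - k)) = u powi (-2 * (k - l))" .
  then show ?thesis unfolding e1 e2 e3 by (simp add: field_simps)
qed

lemma psi_id:
  fixes u :: complex
  assumes u: "norm u = 1" and lm: "l \<le> int m" and al: "a l \<noteq> 0"
  shows "Re (cnj u ^ (2 * nat (int m - l)) / a l * Gs m a u) = Re (1 + (\<Sum>n. bb l n * (cnj u ^ 2) ^ Suc n))"
proof -
  define W where "W = cnj u ^ 2"
  have W1: "norm W = 1" using u by (simp add: W_def norm_power)
  have W0: "W \<noteq> 0" and Wi: "cnj W = inverse W" using unit_inv[OF W1] by auto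
  define f where "f = (\<lambda>k. (a k / a l) * W powi (k - l))"
  have nf: "norm (f k) = norm (a k) / norm (a l)" for k
    by (simp add: f_def norm_mult norm_divide norm_power_int W1)
  have sf: "f summable_on UNIV"
    by (rule abs_summable_summable)
       (use summable_on_cmult_left[OF sa, of "inverse (norm (a l))"] in \<open>simp add: divide_inverse nf\<close>)
  have "cnj u ^ (2 * nat (int m - l)) / a l * Gs m a u = (\<Sum>\<^sub>\<infinity>k. cnj u ^ (2 * nat (int m - l)) / a l * (a k * (cnj u powi k * u powi (int (2*m) - k))))"
    unfolding Gs_def by (rule infsum_cmult_right[symmetric]) (rule G_basic(1))
  also have "\<dots> = infsum f UNIV"
    unfolding f_def W_def by (rule infsum_cong) (rule term_id[OF u lm])
  finally have L: "cnj u ^ (2 * nat (int m - l)) / a l * Gs m a u = infsum f UNIV" .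
  have fl: "f l = 1" using al by (simp add: f_def)
  have sp: "(\<lambda>n. f (l + int (Suc n)) + f (l - int (Suc n))) sums (infsum f UNIV - 1)"
    using int_split[OF sf, of l] fl by simp
  have ReT: "Re (f (l + int (Suc n)) + f (l - int (Suc n))) = Re (bb l n * W ^ Suc n)" for n
  proof -
    have "W powi (l + int (Suc n) - l) = W ^ Suc n" by (simp only: add_diff_cancel_left' power_int_of_nat)
    then have a1: "f (l + int (Suc n)) = a (l + int (Suc n)) / a l * W ^ Suc n"
      by (simp only: f_def)
    have "W powi (- int (Suc n)) = inverse (W powi int (Suc n))" by (rule power_int_minus)
    also have "\<dots> = cnj W ^ Suc n" by (simp only: power_int_of_nat Wi power_inverse)
    finally have "W powi (- int (Suc n)) = cnj W ^ Suc n" .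
    then have a2: "f (l - int (Suc n)) = a (l - int (Suc n)) / a l * cnj (W ^ Suc n)"
      by (simp add: f_def)
    have "Re (a (l - int (Suc n)) / a l * cnj (W ^ Suc n)) = Re (cnj (a (l - int (Suc n))) / cnj (a l) * W ^ Suc n)"
    proof -
      have "Re (a (l - int (Suc n)) / a l * cnj (W ^ Suc n)) = Re (cnj (a (l - int (Suc n)) / a l * cnj (W ^ Suc n)))"
        using complex_cnj_cnj by (metis cnj.sel(1))
      also have "\<dots> = Re (cnj (a (l - int (Suc n))) / cnj (a l) * W ^ Suc n)" by (simp only: complex_cnj_mult complex_cnj_divide complex_cnj_cnj)
      finally show ?thesis .
    qed
    then show ?thesis unfolding a1 a2 bb_def by (simp add: distrib_right)
  qed
  have sbw: "summable (\<lambda>n. bb l n * W ^ Suc n)" by (rule sum_bbw[OF W1])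
  have "Re (infsum f UNIV) = 1 + Re (infsum f UNIV - 1)" by simp
  also have "Re (infsum f UNIV - 1) = (\<Sum>n. Re (f (l + int (Suc n)) + f (l - int (Suc n))))"
    by (rule sums_unique[OF bounded_linear.sums[OF bounded_linear_Re sp]])
  also have "\<dots> = (\<Sum>n. Re (bb l n * W ^ Suc n))" unfolding ReT ..
  also have "\<dots> = Re (\<Sum>n. bb l n * W ^ Suc n)"
    by (rule sums_unique[OF bounded_linear.sums[OF bounded_linear_Re summable_sums[OF sbw]], symmetric])
  finally show ?thesis unfolding L W_def by simp
qed

end




lemma pointwise:
  fixes z G R al :: complex and s \<delta> \<epsilon>1 \<epsilon>2 A0 :: real and d m :: nat
  assumes z: "z \<noteq> 0" and al: "al \<noteq> 0"
    and psi: "Re (cnj z ^ (2*d) / al * G) \<ge> \<delta> * norm z ^ (2*d + 2*m)"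
    and dpos: "\<delta> > 0"
    and nG: "norm G \<le> A0 * norm z ^ (2*m)"
    and nR: "norm R \<le> \<epsilon>1 * norm G" and e1: "\<epsilon>1 \<le> 1" "\<epsilon>1 \<ge> 0"
    and c1: "\<epsilon>1 * A0 / norm al \<le> \<delta>/4"
    and c2: "norm (\<i> / (of_nat (2*d+1) * al)) * \<epsilon>2 * (2 * A0) \<le> \<delta>/4"
    and e2: "\<epsilon>2 \<ge> 0"
    and E: "norm ((cnj z + (of_real s * G + R))^(2*d+1) - cnj z^(2*d+1) - of_nat (2*d+1) * cnj z^(2*d+1-1) * (of_real s * G + R))
            \<le> \<epsilon>2 * norm (cnj z) ^ (2*d+1-1) * norm (of_real s * G + R)"
    and s: "\<bar>s\<bar> = 1"
  shows "s * Im ((\<i> / (of_nat (2*d+1) * al)) * (cnj z + (of_real s * G + R))^(2*d+1)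
                 + cnj (\<i> / (of_nat (2*d+1) * al)) * z^(2*d+1)) > 0"
proof -
  define N where "N = 2*d+1"
  define c where "c = \<i> / (of_nat N * al)"
  define x where "x = cnj z"
  define h where "h = of_real s * G + R"
  define T where "T = norm z ^ (2*d + 2*m)"
  define Er where "Er = (x + h)^N - x^N - of_nat N * x^(N-1) * h"
  have T0: "T > 0" using z by (simp add: T_def)
  have nx: "norm x = norm z" by (simp add: x_def)
  have N1: "N - 1 = 2*d" by (simp add: N_def)
  have "Im (c * (x + h)^N + cnj c * z^N) = Im (c * of_nat N * x^(N-1) * h) + Im (c * Er) + Im (c * x^N + cnj c * z^N)"
    by (simp add: Er_def algebra_simps)
  also have "Im (c * x^N + cnj c * z^N) = 0"
  proof -
    have eq: "cnj c * z^N = cnj (c * x^N)" by (simp add: x_def)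
    have gen: "\<And>y::complex. Im (y + cnj y) = 0" by simp
    show ?thesis unfolding eq by (rule gen)
  qed
  also have "c * of_nat N * x^(N-1) * h = \<i> * (cnj z ^ (2*d) / al * h)"
  proof -
    have Nz: "(of_nat N :: complex) \<noteq> 0" by (simp only: of_nat_eq_0_iff) (simp add: N_def)
    show ?thesis unfolding c_def N1 x_def using Nz al by (simp add: field_simps)
  qed
  also have "Im (\<i> * (cnj z ^ (2*d) / al * h)) = Re (cnj z ^ (2*d) / al * h)"
  proof -
    have gen: "\<And>Y. Im (\<i> * Y) = Re Y" by simp
    show ?thesis by (rule gen)
  qed
  also have "cnj z ^ (2*d) / al * h = of_real s * (cnj z ^ (2*d) / al * G) + cnj z ^ (2*d) / al * R"
    by (simp add: h_def algebra_simps add_divide_distrib)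
  finally have I0: "Im (c * (x + h)^N + cnj c * z^N) = Re (of_real s * (cnj z ^ (2*d) / al * G) + cnj z ^ (2*d) / al * R) + Im (c * Er)"
    by (simp only: add_0_right)
  have gen: "\<And>Y Z. Re (of_real s * Y + Z) = s * Re Y + Re Z" by simp
  have I: "Im (c * (x + h)^N + cnj c * z^N) = s * Re (cnj z ^ (2*d) / al * G) + Re (cnj z ^ (2*d) / al * R) + Im (c * Er)"
    unfolding I0 gen ..
  have nRb: "norm R \<le> \<epsilon>1 * (A0 * norm z ^ (2*m))"
    using mult_left_mono[OF nG e1(2)] nR by linarith
  have r1: "\<bar>Re (cnj z ^ (2*d) / al * R)\<bar> \<le> \<delta>/4 * T"
  proof -
    have "\<bar>Re (cnj z ^ (2*d) / al * R)\<bar> \<le> norm (cnj z ^ (2*d) / al * R)" by (rule abs_Re_le_cmod)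
    also have "\<dots> = norm z ^ (2*d) / norm al * norm R" by (simp add: norm_mult norm_divide norm_power)
    also have "\<dots> \<le> norm z ^ (2*d) / norm al * (\<epsilon>1 * (A0 * norm z ^ (2*m)))"
      by (intro mult_left_mono nRb) auto
    also have "\<dots> = (\<epsilon>1 * A0 / norm al) * T" by (simp add: T_def power_add field_simps)
    also have "\<dots> \<le> \<delta>/4 * T" using c1 T0 by (intro mult_right_mono) auto
    finally show ?thesis .
  qed
  have nh: "norm h \<le> 2 * A0 * norm z ^ (2*m)"
  proof -
    have "norm h \<le> norm (of_real s * G) + norm R" unfolding h_def by (rule norm_triangle_ineq)
    also have "\<dots> = norm G + norm R" using s by (simp add: norm_mult)
    also have "\<dots> \<le> A0 * norm z ^ (2*m) + 1 * (A0 * norm z ^ (2*m))"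
    proof -
      have X0: "A0 * norm z ^ (2*m) \<ge> 0" using nG norm_ge_zero order.trans by blast
      have "\<epsilon>1 * (A0 * norm z ^ (2*m)) \<le> 1 * (A0 * norm z ^ (2*m))" by (rule mult_right_mono[OF e1(1) X0])
      then show ?thesis using nG nRb by linarith
    qed
    finally show ?thesis by simp
  qed
  have r2: "\<bar>Im (c * Er)\<bar> \<le> \<delta>/4 * T"
  proof -
    have "\<bar>Im (c * Er)\<bar> \<le> norm (c * Er)" by (rule abs_Im_le_cmod)
    also have "\<dots> = norm c * norm Er" by (simp add: norm_mult)
    also have "\<dots> \<le> norm c * (\<epsilon>2 * norm z ^ (2*d) * norm h)"
      using E unfolding Er_def c_def N_def x_def h_def nx N1 by (intro mult_left_mono) (auto simp: N_def)
    also have "\<dots> \<le> norm c * (\<epsilon>2 * norm z ^ (2*d) * (2 * A0 * norm z ^ (2*m)))"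
      using nh e2 by (intro mult_left_mono) auto
    also have "\<dots> = (norm c * \<epsilon>2 * (2 * A0)) * T" by (simp add: T_def power_add field_simps)
    also have "\<dots> \<le> \<delta>/4 * T" using c2 T0 unfolding c_def N_def by (intro mult_right_mono) auto
    finally show ?thesis .
  qed
  have "s * Im (c * (x + h)^N + cnj c * z^N) = s * s * Re (cnj z ^ (2*d) / al * G) + s * (Re (cnj z ^ (2*d) / al * R) + Im (c * Er))"
    unfolding I by (simp add: algebra_simps)
  also have "s * s = 1" using s by (metis abs_mult_self_eq mult_1_right)
  finally have F1: "s * Im (c * (x + h)^N + cnj c * z^N) = Re (cnj z ^ (2*d) / al * G) + s * (Re (cnj z ^ (2*d) / al * R) + Im (c * Er))"
    by simp
  have F2: "\<bar>s * (Re (cnj z ^ (2*d) / al * R) + Im (c * Er))\<bar> \<le> \<delta>/2 * T"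
  proof -
    have "\<bar>s * (Re (cnj z ^ (2*d) / al * R) + Im (c * Er))\<bar> = \<bar>Re (cnj z ^ (2*d) / al * R) + Im (c * Er)\<bar>"
      using s by (simp add: abs_mult)
    also have "\<dots> \<le> \<bar>Re (cnj z ^ (2*d) / al * R)\<bar> + \<bar>Im (c * Er)\<bar>" by (rule abs_triangle_ineq)
    finally show ?thesis using r1 r2 by linarith
  qed
  have F3: "Re (cnj z ^ (2*d) / al * G) \<ge> \<delta> * T" using psi by (simp add: T_def)
  have "s * Im (c * (x + h)^N + cnj c * z^N) > 0"
  proof -
    have "\<delta>/2 * T < \<delta> * T" using dpos T0 by simp
    moreover have "- (\<delta>/2 * T) \<le> s * (Re (cnj z ^ (2*d) / al * R) + Im (c * Er))" using F2 by linarith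
    ultimately show ?thesis using F1 F3 by linarith
  qed
  then show ?thesis unfolding c_def N_def x_def h_def by simp
qed




context setting
begin

lemma delta:
  assumes lm: "l \<le> int m" and al: "a l \<noteq> 0"
    and pos: "\<forall>w. norm w = 1 \<longrightarrow> Re (1 + (\<Sum>n. bb l n * w ^ Suc n)) > 0"
  shows "\<exists>\<delta>>0. \<forall>z. Re (cnj z ^ (2 * nat (int m - l)) / a l * Gs m a z) \<ge> \<delta> * norm z ^ (2 * nat (int m - l) + 2*m)"
proof -
  define d where "d = nat (int m - l)"
  define \<psi> where "\<psi> = (\<lambda>z. Re (cnj z ^ (2*d) / a l * Gs m a z))"
  have cont: "continuous_on (sphere 0 1) \<psi>"
    unfolding \<psi>_def
    using al by (intro continuous_intros continuous_on_subset[OF G_cont]) auto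
  obtain u0 where u0: "u0 \<in> sphere 0 1" and mn: "\<And>u. u \<in> sphere 0 1 \<Longrightarrow> \<psi> u0 \<le> \<psi> u"
    using continuous_attains_inf[OF compact_sphere _ cont] by (metis empty_iff mem_sphere_0 norm_one)
  have pos': "\<psi> u > 0" if "norm u = 1" for u
  proof -
    have "norm (cnj u ^ 2) = 1" using that by (simp add: norm_power)
    then show ?thesis unfolding \<psi>_def d_def psi_id[OF that lm al] using pos by blast
  qed
  define \<delta> where "\<delta> = \<psi> u0"
  have dpos: "\<delta> > 0" using u0 pos' by (simp add: \<delta>_def)
  have "\<psi> z \<ge> \<delta> * norm z ^ (2*d + 2*m)" for z
  proof (cases "z = 0")
    case True
    then show ?thesis using n2 by (simp add: \<psi>_def G0 power_0_left)
  next
    case False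
    define t where "t = norm z"
    define u where "u = z / of_real t"
    have t: "t > 0" using False by (simp add: t_def)
    have u: "norm u = 1" using t by (simp add: u_def norm_divide t_def)
    have zu: "z = of_real t * u" using t by (simp add: u_def)
    have "\<psi> z = Re (of_real (t ^ (2*d) * t ^ (2*m)) * (cnj u ^ (2*d) / a l * Gs m a u))"
      unfolding \<psi>_def zu using G_homog unfolding homogeneous_of_degree_def
      using t by (simp add: power_mult_distrib mult_ac)
    also have "\<dots> = (t ^ (2*d) * t ^ (2*m)) * \<psi> u"
    proof -
      have gen: "\<And>r Y. Re (of_real r * Y) = r * Re Y" by simp
      show ?thesis unfolding \<psi>_def by (rule gen)
    qed
    also have "\<dots> = t ^ (2*d + 2*m) * \<psi> u" by (simp add: power_add)
    also have "\<dots> \<ge> t ^ (2*d + 2*m) * \<delta>"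
      using mn[of u] u t by (intro mult_left_mono) (auto simp: \<delta>_def)
    finally show ?thesis by (simp add: t_def mult.commute)
  qed
  then show ?thesis using dpos unfolding \<psi>_def d_def by blast
qed

end




context setting
begin

lemma G_small: "Gs m a \<in> o[at 0](\<lambda>z. z)"
proof (rule landau_o.smallI)
  fix c :: real assume c: "c > 0"
  define A0 where "A0 = (\<Sum>\<^sub>\<infinity>k. norm (a k))"
  have "((\<lambda>z::complex. A0 * norm z ^ (2*m-1)) \<longlongrightarrow> A0 * norm (0::complex) ^ (2*m-1)) (at 0)"
    by (intro tendsto_intros)
  then have "((\<lambda>z::complex. A0 * norm z ^ (2*m-1)) \<longlongrightarrow> 0) (at 0)" using n1 by (simp add: power_0_left)
  then have ev: "\<forall>\<^sub>F z in at (0::complex). A0 * norm z ^ (2*m-1) < c" using c by (rule order_tendstoD(2))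
  then show "\<forall>\<^sub>F z in at 0. norm (Gs m a z) \<le> c * norm z"
  proof eventually_elim
    case (elim z)
    have e: "norm z ^ (2*m) = norm z ^ (2*m-1) * norm z" using n2 by (metis Suc_diff_1 power_Suc2)
    have "norm (Gs m a z) \<le> A0 * norm z ^ (2*m)" unfolding A0_def by (rule G_bound)
    also have "\<dots> = (A0 * norm z ^ (2*m-1)) * norm z" unfolding e by simp
    also have "\<dots> \<le> c * norm z" using elim by (intro mult_right_mono) auto
    finally show ?case .
  qed
qed

lemma get_l:
  assumes conds:
      "(\<exists>l::int. l \<le> int m \<and> norm (a l) > (\<Sum>\<^sub>\<infinity>n\<in>UNIV - {l}. norm (a n)))
       \<or> (\<exists>l::int. l \<le> int m \<and> a l \<noteq> 0 \<and>
            (\<Sum>n. norm (a (l + int (Suc n)) / a l + cnj (a (l - int (Suc n))) / cnj (a l))) < 1)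
       \<or> (\<exists>l::int. l \<le> int m \<and> a l \<noteq> 0 \<and>
            (\<forall>w::complex. norm w = 1 \<longrightarrow>
               Re (1 + (\<Sum>n. (a (l + int (Suc n)) / a l + cnj (a (l - int (Suc n))) / cnj (a l))
                              * w ^ Suc n)) > 0))"
  shows "\<exists>l. l \<le> int m \<and> a l \<noteq> 0 \<and> (\<forall>w. norm w = 1 \<longrightarrow> Re (1 + (\<Sum>n. bb l n * w ^ Suc n)) > 0)"
  using conds
proof (elim disjE exE conjE)
  fix l assume "l \<le> int m" "norm (a l) > (\<Sum>\<^sub>\<infinity>n\<in>UNIV - {l}. norm (a n))"
  then show ?thesis using cond_i_ii[of l] cond_ii_iii[of l] by blast
next
  fix l assume "l \<le> int m" "a l \<noteq> 0"
    "(\<Sum>n. norm (a (l + int (Suc n)) / a l + cnj (a (l - int (Suc n))) / cnj (a l))) < 1"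
  then show ?thesis using cond_ii_iii[of l] unfolding bb_def by blast
next
  fix l assume "l \<le> int m" "a l \<noteq> 0"
    "\<forall>w::complex. norm w = 1 \<longrightarrow>
               Re (1 + (\<Sum>n. (a (l + int (Suc n)) / a l + cnj (a (l - int (Suc n))) / cnj (a l))
                              * w ^ Suc n)) > 0"
  then show ?thesis unfolding bb_def by blast
qed

end




context setting
begin

lemma main_pc:
  assumes lm: "l \<le> int m" and al: "a l \<noteq> 0"
    and pos: "\<forall>w. norm w = 1 \<longrightarrow> Re (1 + (\<Sum>n. bb l n * w ^ Suc n)) > 0"
  shows "satisfies_polynomial_condition (Gs m a)"
proof -
  define d where "d = nat (int m - l)"
  define N where "N = 2*d+1"
  define c where "c = \<i> / (of_nat N * a l)"
  obtain \<delta> where dpos: "\<delta> > 0"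
    and psi: "\<And>z. Re (cnj z ^ (2*d) / a l * Gs m a z) \<ge> \<delta> * norm z ^ (2*d + 2*m)"
    using delta[OF lm al pos] unfolding d_def by blast
  define A0 where "A0 = (\<Sum>\<^sub>\<infinity>k. norm (a k))"
  have A0: "A0 \<ge> 0" unfolding A0_def by (rule infsum_nonneg) simp
  define K where "K = A0 / norm (a l)"
  have K: "K \<ge> 0" using A0 by (simp add: K_def)
  define \<epsilon>1 where "\<epsilon>1 = min 1 (\<delta> / (4 * (K + 1)))"
  have e1: "\<epsilon>1 > 0" "\<epsilon>1 \<le> 1" using dpos K by (auto simp: \<epsilon>1_def)
  have c1: "\<epsilon>1 * A0 / norm (a l) \<le> \<delta>/4"
  proof -
    have "\<epsilon>1 * A0 / norm (a l) = \<epsilon>1 * K" by (simp add: K_def)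
    also have "\<dots> \<le> \<delta> / (4 * (K + 1)) * K" using K by (intro mult_right_mono) (auto simp: \<epsilon>1_def)
    also have "\<dots> \<le> \<delta> / (4 * (K + 1)) * (K + 1)" using K dpos by (intro mult_left_mono) auto
    also have "\<dots> = \<delta>/4" using K by (simp add: field_simps)
    finally show ?thesis .
  qed
  define \<epsilon>2 where "\<epsilon>2 = \<delta> / (8 * (norm c * A0 + 1))"
  have nc: "norm c * A0 \<ge> 0" using A0 by simp
  have e2: "\<epsilon>2 > 0" using dpos nc by (simp add: \<epsilon>2_def)
  have c2: "norm c * \<epsilon>2 * (2 * A0) \<le> \<delta>/4"
  proof -
    have "norm c * \<epsilon>2 * (2 * A0) = \<delta> / (4 * (norm c * A0 + 1)) * (norm c * A0)"
      using nc by (simp add: \<epsilon>2_def field_simps)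
    also have "\<dots> \<le> \<delta> / (4 * (norm c * A0 + 1)) * (norm c * A0 + 1)" using nc dpos by (intro mult_left_mono) auto
    also have "\<dots> = \<delta>/4" using nc by (simp add: field_simps)
    finally show ?thesis .
  qed
  obtain \<eta> where eta: "\<eta> > 0" and PE: "\<And>x h :: complex. x \<noteq> 0 \<Longrightarrow> norm h < \<eta> * norm x \<Longrightarrow>
     norm ((x + h)^N - x^N - of_nat N * x^(N-1) * h) \<le> \<epsilon>2 * norm x ^ (N-1) * norm h"
    using power_err[of N \<epsilon>2] e2 by (auto simp: N_def)
  have polyc: "polynomial_condition_wrt (Gs m a) (\<lambda>z w. c * w ^ N + cnj c * z ^ N)"
    unfolding polynomial_condition_wrt_def
  proof (intro allI impI, elim conjE)
    fix R :: "complex \<Rightarrow> complex"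
    assume Ro: "R \<in> o[at 0](Gs m a)"
    have E1: "\<forall>\<^sub>F z in at 0. norm (R z) \<le> \<epsilon>1 * norm (Gs m a z)"
      by (rule landau_o.smallD[OF Ro e1(1)])
    have "((\<lambda>z::complex. 2 * A0 * norm z ^ (2*m-1)) \<longlongrightarrow> 2 * A0 * norm (0::complex) ^ (2*m-1)) (at 0)"
      by (intro tendsto_intros)
    then have "((\<lambda>z::complex. 2 * A0 * norm z ^ (2*m-1)) \<longlongrightarrow> 0) (at 0)" using n1 by (simp add: power_0_left)
    then have E2: "\<forall>\<^sub>F z in at (0::complex). 2 * A0 * norm z ^ (2*m-1) < \<eta>" using eta by (rule order_tendstoD(2))
    have E3: "\<forall>\<^sub>F z in at (0::complex). z \<noteq> 0" by (rule eventually_at_filter[THEN iffD2]) simp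
    show "\<forall>\<^sub>F z in at 0. Im (c * (cnj z + Gs m a z + R z) ^ N + cnj c * z ^ N) > 0 \<and>
                       Im (c * (cnj z - Gs m a z + R z) ^ N + cnj c * z ^ N) < 0"
      using E1 E2 E3
    proof eventually_elim
      case (elim z)
      have z: "z \<noteq> 0" using elim by simp
      have key: "s * Im (c * (cnj z + (of_real s * Gs m a z + R z)) ^ N + cnj c * z ^ N) > 0"
        if s: "\<bar>s\<bar> = 1" for s :: real
      proof -
        define h where "h = of_real s * Gs m a z + R z"
        have nG: "norm (Gs m a z) \<le> A0 * norm z ^ (2*m)" unfolding A0_def by (rule G_bound)
        have nRb: "norm (R z) \<le> A0 * norm z ^ (2*m)"
        proof -
          have "\<epsilon>1 * norm (Gs m a z) \<le> 1 * norm (Gs m a z)" by (rule mult_right_mono[OF e1(2)]) simp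
          then show ?thesis using elim(1) nG by linarith
        qed
        have nh: "norm h \<le> 2 * A0 * norm z ^ (2*m)"
        proof -
          have "norm h \<le> norm (of_real s * Gs m a z) + norm (R z)" unfolding h_def by (rule norm_triangle_ineq)
          also have "\<dots> = norm (Gs m a z) + norm (R z)" using s by (simp add: norm_mult)
          finally show ?thesis using nG nRb by linarith
        qed
        have ee: "norm z ^ (2*m) = norm z ^ (2*m-1) * norm z" using n2 by (metis Suc_diff_1 power_Suc2)
        have "norm h < \<eta> * norm (cnj z)"
        proof -
          have "norm h \<le> (2 * A0 * norm z ^ (2*m-1)) * norm z" using nh unfolding ee by (simp add: mult_ac)
          also have "\<dots> < \<eta> * norm z" using elim(2) z by (intro mult_strict_right_mono) auto
          finally show ?thesis by simp
        qed
        then have Eb: "norm ((cnj z + h)^N - cnj z^N - of_nat N * cnj z^(N-1) * h) \<le> \<epsilon>2 * norm (cnj z) ^ (N-1) * norm h"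
          using z by (intro PE) auto
        show ?thesis
          using pointwise[OF z al psi dpos nG elim(1) e1(2) less_imp_le[OF e1(1)] c1
              c2[unfolded c_def N_def] less_imp_le[OF e2] Eb[unfolded N_def h_def] s]
          unfolding c_def N_def h_def .
      qed
      have eq1: "cnj z + Gs m a z + R z = cnj z + (of_real 1 * Gs m a z + R z)" by simp
      have eq2: "cnj z - Gs m a z + R z = cnj z + (of_real (-1) * Gs m a z + R z)" by simp
      have p1: "1 * Im (c * (cnj z + (of_real 1 * Gs m a z + R z)) ^ N + cnj c * z ^ N) > 0"
        by (rule key) simp
      have p2: "(-1) * Im (c * (cnj z + (of_real (-1) * Gs m a z + R z)) ^ N + cnj c * z ^ N) > 0"
        by (rule key) simp
      show ?case unfolding eq1 eq2 using p1 p2 by linarith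
    qed
  qed
  have C1b: "\<exists>e>0. C1_on (ball 0 e) (Gs m a)"
  proof -
    from G_C1 obtain f' where f1: "\<And>x. (Gs m a has_derivative blinfun_apply (f' x)) (at x)"
      and f2: "continuous_on UNIV f'" unfolding C1_on_def by blast
    have "continuous_on (ball 0 1) f'" by (rule continuous_on_subset[OF f2]) simp
    then have "C1_on (ball 0 1) (Gs m a)" unfolding C1_on_def using f1 by blast
    then show ?thesis by (intro exI[of _ 1]) simp
  qed
  have hp: "holo_poly2 (\<lambda>z w. c * w ^ N + cnj c * z ^ N)" by (rule holo_poly2_simple) (simp add: N_def)
  show ?thesis
    unfolding satisfies_polynomial_condition_def using G_even C1b G_small polyc hp by blast
qed

end



theorem theorem3p3:
  fixes m :: nat and a :: "int \<Rightarrow> complex"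
  assumes m_pos: "m > 0"
    and summ: "(\<lambda>k. norm (of_int k * a k)) summable_on (UNIV :: int set)"
    and conds:
      "(\<exists>l::int. l \<le> int m \<and> norm (a l) > (\<Sum>\<^sub>\<infinity>n\<in>UNIV - {l}. norm (a n)))
       \<or> (\<exists>l::int. l \<le> int m \<and> a l \<noteq> 0 \<and>
            (\<Sum>n. norm (a (l + int (Suc n)) / a l + cnj (a (l - int (Suc n))) / cnj (a l))) < 1)
       \<or> (\<exists>l::int. l \<le> int m \<and> a l \<noteq> 0 \<and>
            (\<forall>w::complex. norm w = 1 \<longrightarrow>
               Re (1 + (\<Sum>n. (a (l + int (Suc n)) / a l + cnj (a (l - int (Suc n))) / cnj (a l))
                              * w ^ Suc n)) > 0))"
  shows "even_fun (gser a m) \<and> homogeneous_of_degree (2 * m) (gser a m)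
         \<and> C1_on UNIV (gser a m) \<and> satisfies_polynomial_condition (gser a m)"
proof -
  interpret setting m a using m_pos summ by unfold_locales
  obtain l where l: "l \<le> int m \<and> a l \<noteq> 0 \<and> (\<forall>w. norm w = 1 \<longrightarrow> Re (1 + (\<Sum>n. bb l n * w ^ Suc n)) > 0)"
    using get_l[OF conds] by (rule exE)
  have sp: "satisfies_polynomial_condition (Gs m a)"
    by (rule main_pc[OF conjunct1[OF l] conjunct1[OF conjunct2[OF l]] conjunct2[OF conjunct2[OF l]]])
  show ?thesis unfolding gser_Gs by (intro conjI G_even G_homog G_C1 sp)
qed



end
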